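(* Let $\Gamma$ be a $\mathbb{Z}^d$-periodic graph with fundamental domain $W$, identified with $[n]$. The generic dispersion polynomial $\Phi(z,\lambda,e,V)=\det M(z,\lambda,e,V)$, where $M(z,\lambda,e,V)=\lambda I_n-H(z,e,V)$, is cancellation-free.
   Context: A $\mathbb{Z}^d$-periodic graph $\Gamma$ is a simple undirected graph with bounded vertex degrees and a free action of $\mathbb{Z}^d$ by automorphisms, $(\alpha,v)\mapsto\alpha+v$, with finitely many orbits of vertices and edges; $W$ contains one vertex from each vertex orbit. The generic Floquet matrix $H(z,e,V)$ is the $W\times W$ matrix with $(v,u)$ entry $\delta_{v,u}V(v)-\sum_{\alpha\in\mathbb{Z}^d:\ v\sim\alpha+u}e_{(v,\alpha+u)}z^\alpha$, where the edge weights $e$ (one indeterminate per $\mathbb{Z}^d$-orbit of edges, $e_{(u,v)}=e_{(v,u)}$) and potentials $V(v)$ (one indeterminate per $v\in W$) are independent indeterminates, and $z^\alpha=z_1^{\alpha_1}\cdots z_d^{\alpha_d}$. For an $n\times n$ matrix $M=(f_{i,j})$ of (Laurent) polynomials, $\det M=\sum_{w\in S_n}\mathrm{sgn}(w)M_w$ with $M_w=f_{1,w(1)}\cdots f_{n,w(n)}$; $\det M$ is cancellation-free if for every $w\in S_n$ with $M_w\neq 0$, every monomial occurring in $M_w$ occurs in $\det M$ (i.e. the support of $M_w$ is contained in the support of $\det M$). Here monomials are in all the variables $z,\lambda,e,V$. *)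

theory Defs
  imports Main "HOL-Library.Poly_Mapping" "HOL-Combinatorics.Permutations"
begin

text \<open>Indeterminates: z_k (k ranging over the finite index type 'd, so d = CARD('d)),
  lambda, one edge weight per Z^d-orbit of (undirected) edges, one potential per vertex of W = [n].
  An edge orbit is represented by the set of its two directed representatives
  starting in the fundamental domain: the edge {(0,i),(alpha,j)} is represented by
  {(i,j,alpha),(j,i,-alpha)}.\<close>
datatype 'd var = Zv 'd | Lam | Ev "(nat \<times> nat \<times> ('d \<Rightarrow> int)) set" | Vv nat

text \<open>Laurent polynomials with integer coefficients in the above indeterminates:
  a monomial is a finitely supported exponent map var => int.\<close>
type_synonym 'd lpoly = "('d var \<Rightarrow>\<^sub>0 int) \<Rightarrow>\<^sub>0 int"

definition pvar :: "'d var \<Rightarrow> 'd lpoly" where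
  "pvar x = Poly_Mapping.single (Poly_Mapping.single x 1) 1"

definition zpow :: "('d::finite \<Rightarrow> int) \<Rightarrow> 'd lpoly" where
  "zpow \<alpha> = Poly_Mapping.single (\<Sum>k\<in>UNIV. Poly_Mapping.single (Zv k) (\<alpha> k)) 1"

definition edge_var :: "nat \<Rightarrow> nat \<Rightarrow> ('d \<Rightarrow> int) \<Rightarrow> 'd var" where
  "edge_var i j \<alpha> = Ev {(i, j, \<alpha>), (j, i, (\<lambda>k. - \<alpha> k))}"

text \<open>A Z^d-periodic graph with fundamental domain W = {0..<n}: vertex set Z^d x W,
  Z^d acting by translation on the first component; simple (symmetric, irreflexive),
  translation invariant, with finitely many edge orbits (equivalently: each vertex of W
  has finitely many neighbours in each orbit).\<close>
definition periodic_graph :: "nat \<Rightarrow> (('d::finite \<Rightarrow> int) \<times> nat \<Rightarrow> ('d \<Rightarrow> int) \<times> nat \<Rightarrow> bool) \<Rightarrow> bool" where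
  "periodic_graph n adj \<longleftrightarrow>
     (\<forall>x y. adj x y \<longrightarrow> adj y x) \<and>
     (\<forall>x. \<not> adj x x) \<and>
     (\<forall>x y. adj x y \<longrightarrow> snd x < n \<and> snd y < n) \<and>
     (\<forall>a b c i j. adj (a, i) (b, j) \<longleftrightarrow> adj (\<lambda>k. a k + c k, i) (\<lambda>k. b k + c k, j)) \<and>
     (\<forall>i j. finite {\<alpha>. adj (\<lambda>_. 0, i) (\<alpha>, j)})"

definition floquet_H :: "(('d::finite \<Rightarrow> int) \<times> nat \<Rightarrow> ('d \<Rightarrow> int) \<times> nat \<Rightarrow> bool) \<Rightarrow> nat \<Rightarrow> nat \<Rightarrow> 'd lpoly" where
  "floquet_H adj i j =
     (if i = j then pvar (Vv i) else 0)
     - (\<Sum>\<alpha>\<in>{\<alpha>. adj (\<lambda>_. 0, i) (\<alpha>, j)}. pvar (edge_var i j \<alpha>) * zpow \<alpha>)"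

definition dispersion_matrix :: "(('d::finite \<Rightarrow> int) \<times> nat \<Rightarrow> ('d \<Rightarrow> int) \<times> nat \<Rightarrow> bool) \<Rightarrow> nat \<Rightarrow> nat \<Rightarrow> 'd lpoly" where
  "dispersion_matrix adj i j = (if i = j then pvar Lam else 0) - floquet_H adj i j"

definition perm_term :: "(nat \<Rightarrow> nat \<Rightarrow> 'a::comm_ring_1) \<Rightarrow> nat \<Rightarrow> (nat \<Rightarrow> nat) \<Rightarrow> 'a" where
  "perm_term M n w = (\<Prod>i<n. M i (w i))"

definition det_leibniz :: "(nat \<Rightarrow> nat \<Rightarrow> 'a::comm_ring_1) \<Rightarrow> nat \<Rightarrow> 'a" where
  "det_leibniz M n = (\<Sum>w | w permutes {..<n}. of_int (sign w) * perm_term M n w)"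

definition cancellation_free :: "(nat \<Rightarrow> nat \<Rightarrow> ('v \<Rightarrow>\<^sub>0 int) \<Rightarrow>\<^sub>0 int) \<Rightarrow> nat \<Rightarrow> bool" where
  "cancellation_free M n \<longleftrightarrow>
     (\<forall>w. w permutes {..<n} \<longrightarrow> perm_term M n w \<noteq> 0 \<longrightarrow>
        Poly_Mapping.keys (perm_term M n w) \<subseteq> Poly_Mapping.keys (det_leibniz M n))"

end

theory Submission
  imports Defs "HOL-Library.FuncSet"
begin


definition Rel :: "(nat \<Rightarrow> nat) \<Rightarrow> (nat \<Rightarrow> nat) \<Rightarrow> bool" where
  "Rel w v \<longleftrightarrow> (\<forall>i y. i \<noteq> y \<longrightarrow>
     (if w i = y then 1 else 0) + (if w y = i then 1 else (0::nat)) =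
     (if v i = y then 1 else 0) + (if v y = i then 1 else 0))"

lemma RelD:
  assumes "Rel w v" "i \<noteq> y"
  shows "(if w i = y then 1 else 0) + (if w y = i then 1 else (0::nat)) =
     (if v i = y then 1 else 0) + (if v y = i then 1 else 0)"
  using assms unfolding Rel_def by blast

lemma Rel_inv:
  assumes "v permutes S" "Rel w v" shows "Rel w (inv v)"
proof -
  have e: "inv v a = b \<longleftrightarrow> v b = a" for a b
    using assms(1) by (metis permutes_inverses(1) permutes_inverses(2))
  show ?thesis unfolding Rel_def
  proof (intro allI impI)
    fix i y :: nat assume "i \<noteq> y"
    from RelD[OF assms(2) this] show "(if w i = y then 1 else 0) + (if w y = i then 1 else (0::nat)) =
     (if inv v i = y then 1 else 0) + (if inv v y = i then 1 else 0)"
      unfolding e by linarith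
  qed
qed

lemma sign_eq_Rel:
  assumes "finite S" "w permutes S" "v permutes S" "Rel w v"
  shows "sign w = sign v"
  using assms(2-4)
proof (induction "card {x. w x \<noteq> x}" arbitrary: w v rule: less_induct)
  case less
  have finw: "finite {x. w x \<noteq> x}"
  proof -
    have "{x. w x \<noteq> x} \<subseteq> S" using permutes_not_in[OF less.prems(1)] by blast
    then show ?thesis using assms(1) by (rule finite_subset)
  qed
  show ?case
  proof (cases "{x. w x \<noteq> x} = {}")
    case True
    then have wid: "w = id" by auto
    have "v = id"
    proof
      fix x show "v x = id x"
      proof (rule ccontr)
        assume "v x \<noteq> id x"
        then have "x \<noteq> v x" by simp
        with RelD[OF less.prems(3), of x "v x"] show False unfolding wid
          by (auto split: if_splits)
      qed
    qed
    then show ?thesis using wid by simp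
  next
    case False
    then obtain i where wi: "w i \<noteq> i" by auto
    define j where "j = w i"
    define k where "k = inv w i"
    have wk: "w k = i" unfolding k_def by (rule permutes_inverses(1)[OF less.prems(1)])
    have ki: "k \<noteq> i" using wk wi by auto
    have iS: "i \<in> S" using permutes_not_in[OF less.prems(1)] wi by blast
    have jS: "j \<in> S" unfolding j_def using iS less.prems(1) by (simp add: permutes_in_image)
    have ij: "i \<noteq> j" using wi j_def by auto
    have key: "sign w = sign v'" if v': "v' permutes S" "Rel w v'" "v' i = j" for v'
    proof -
      have "(if w i = k then 1 else 0) + (if w k = i then 1 else (0::nat)) =
            (if v' i = k then 1 else 0) + (if v' k = i then 1 else 0)"
        using RelD[OF v'(2), of i k] ki by simp
      then have v'k: "v' k = i" using wk v'(3) j_def by (auto split: if_splits)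
      define u where "u = transpose i j \<circ> w"
      define u' where "u' = transpose i j \<circ> v'"
      have uS: "u permutes S" unfolding u_def
        by (rule permutes_compose[OF less.prems(1) permutes_swap_id[OF iS jS]])
      have u'S: "u' permutes S" unfolding u'_def
        by (rule permutes_compose[OF v'(1) permutes_swap_id[OF iS jS]])
      have winj: "w x = w y \<Longrightarrow> x = y" for x y by (rule injD[OF permutes_inj[OF less.prems(1)]])
      have vinj: "v' x = v' y \<Longrightarrow> x = y" for x y by (rule injD[OF permutes_inj[OF v'(1)]])
      have wnj: "x \<noteq> i \<Longrightarrow> w x \<noteq> j" for x unfolding j_def using winj[of x i] by auto
      have wni: "x \<noteq> k \<Longrightarrow> w x \<noteq> i" for x using winj[of x k] wk by auto
      have vnj: "x \<noteq> i \<Longrightarrow> v' x \<noteq> j" for x using vinj[of x i] v'(3) by auto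
      have vni: "x \<noteq> k \<Longrightarrow> v' x \<noteq> i" for x using vinj[of x k] v'k by auto
      have ux: "u x = (if x = i then i else if x = k then j else w x)" for x
        unfolding u_def using wk j_def wnj[of x] wni[of x] by (simp add: transpose_def)
      have u'x: "u' x = (if x = i then i else if x = k then j else v' x)" for x
        unfolding u'_def using v'k v'(3) vnj[of x] vni[of x] by (simp add: transpose_def)
      have uni: "y \<noteq> i \<Longrightarrow> u y \<noteq> i" for y using ij wni[of y] unfolding ux by auto
      have u'ni: "y \<noteq> i \<Longrightarrow> u' y \<noteq> i" for y using ij vni[of y] unfolding u'x by auto
      have sub: "{x. u x \<noteq> x} \<subseteq> {x. w x \<noteq> x} - {i}"
        using ux wk ki by auto
      have lt: "card {x. u x \<noteq> x} < card {x. w x \<noteq> x}"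
      proof -
        have "i \<in> {x. w x \<noteq> x}" using wi by simp
        then have "card ({x. w x \<noteq> x} - {i}) < card {x. w x \<noteq> x}"
          using card_Diff1_less[OF finw] by blast
        moreover have "card {x. u x \<noteq> x} \<le> card ({x. w x \<noteq> x} - {i})"
          using sub finw by (intro card_mono) auto
        ultimately show ?thesis by linarith
      qed
      have R: "Rel u u'"
        unfolding Rel_def
      proof (intro allI impI)
        fix p y assume py: "p \<noteq> (y::nat)"
        have Rw: "(if w a = b then 1 else 0) + (if w b = a then 1 else (0::nat)) =
            (if v' a = b then 1 else 0) + (if v' b = a then 1 else 0)" if "a \<noteq> b" for a b
          using RelD[OF v'(2) that] .
        show "(if u p = y then 1 else 0) + (if u y = p then 1 else (0::nat)) =
            (if u' p = y then 1 else 0) + (if u' y = p then 1 else 0)"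
        proof -
          consider (a) "p = i" | (b) "y = i" | (c) "p \<noteq> i" "y \<noteq> i" "p = k"
            | (d) "p \<noteq> i" "y \<noteq> i" "y = k" | (e) "p \<noteq> i" "y \<noteq> i" "p \<noteq> k" "y \<noteq> k"
            by blast
          then show ?thesis
          proof cases
            case a
            then show ?thesis using py uni[of y] u'ni[of y] by (simp add: ux u'x)
          next
            case b
            then show ?thesis using py uni[of p] u'ni[of p] by (simp add: ux u'x)
          next
            case c
            have "k \<noteq> y" using c py by simp
            from Rw[OF this] c wk v'k show ?thesis unfolding ux u'x by (simp split: if_splits)
          next
            case d
            have "p \<noteq> k" using d py by simp
            from Rw[OF this] d wk v'k show ?thesis unfolding ux u'x by (simp split: if_splits)
          next
            case e
            from Rw[OF py] e show ?thesis unfolding ux u'x by simp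
          qed
        qed
      qed
      have "sign u = sign u'" using less.hyps[OF lt uS u'S R] .
      moreover have "sign u = - sign w"
      proof -
        have pw: "permutation w" unfolding permutation_permutes using assms(1) less.prems(1) by blast
        show ?thesis unfolding u_def using sign_compose[OF permutation_swap_id pw, of i j] ij
          by (simp add: sign_swap_id)
      qed
      moreover have "sign u' = - sign v'"
      proof -
        have pw: "permutation v'" unfolding permutation_permutes using assms(1) v'(1) by blast
        show ?thesis unfolding u'_def using sign_compose[OF permutation_swap_id pw, of i j] ij
          by (simp add: sign_swap_id)
      qed
      ultimately show ?thesis by simp
    qed
    have "(if w i = j then 1 else 0) + (if w j = i then 1 else (0::nat)) =
            (if v i = j then 1 else 0) + (if v j = i then 1 else 0)"
      using RelD[OF less.prems(3) ij] .
    then have "v i = j \<or> v j = i" using j_def by (auto split: if_splits)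
    then show ?thesis
    proof
      assume "v i = j" then show ?thesis using key less.prems by blast
    next
      assume vj: "v j = i"
      have "inv v i = j" using permutes_inverses(2)[OF less.prems(2), of j] vj by simp
      moreover have "inv v permutes S" using less.prems(2) by (rule permutes_inv)
      moreover have "Rel w (inv v)" using Rel_inv less.prems by blast
      ultimately have "sign w = sign (inv v)" using key by blast
      also have "\<dots> = sign v" using less.prems(2) assms(1)
        by (intro sign_inverse) (auto simp: permutation_permutes)
      finally show ?thesis .
    qed
  qed
qed



definition cntv :: "('a \<Rightarrow> int) \<Rightarrow> ('a \<Rightarrow>\<^sub>0 int) \<Rightarrow> int" where
  "cntv g m = (\<Sum>v\<in>Poly_Mapping.keys m. g v * Poly_Mapping.lookup m v)"

lemma cntv_superset:
  assumes "finite K" "Poly_Mapping.keys m \<subseteq> K"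
  shows "cntv g m = (\<Sum>v\<in>K. g v * Poly_Mapping.lookup m v)"
  unfolding cntv_def
  by (rule sum.mono_neutral_left[OF assms(1) assms(2)]) (simp add: in_keys_iff)

lemma cntv_add: "cntv g (a + b) = cntv g a + cntv g b"
proof -
  let ?K = "Poly_Mapping.keys a \<union> Poly_Mapping.keys b"
  have "cntv g (a + b) = (\<Sum>v\<in>?K. g v * Poly_Mapping.lookup (a + b) v)"
    by (rule cntv_superset) (use keys_add[of a b] in auto)
  also have "\<dots> = (\<Sum>v\<in>?K. g v * Poly_Mapping.lookup a v) + (\<Sum>v\<in>?K. g v * Poly_Mapping.lookup b v)"
    by (simp add: lookup_add distrib_left sum.distrib)
  also have "\<dots> = cntv g a + cntv g b"
    by (simp add: cntv_superset[symmetric])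
  finally show ?thesis .
qed

lemma cntv_zero: "cntv g 0 = 0"
  by (simp add: cntv_def)

lemma cntv_single: "cntv g (Poly_Mapping.single v c) = g v * c"
  by (subst cntv_superset[of "{v}"]) auto

lemma cntv_sum: "cntv g (\<Sum>a\<in>A. h a) = (\<Sum>a\<in>A. cntv g (h a))"
  by (induction A rule: infinite_finite_induct) (auto simp: cntv_add cntv_zero)

definition zexp :: "('d::finite \<Rightarrow> int) \<Rightarrow> ('d var \<Rightarrow>\<^sub>0 int)" where
  "zexp \<alpha> = (\<Sum>k\<in>UNIV. Poly_Mapping.single (Zv k) (\<alpha> k))"

definition Tset :: "(('d::finite \<Rightarrow> int) \<times> nat \<Rightarrow> ('d \<Rightarrow> int) \<times> nat \<Rightarrow> bool) \<Rightarrow> nat \<Rightarrow> nat \<Rightarrow> (nat \<times> ('d \<Rightarrow> int)) set" where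
  "Tset adj i j = (if i = j then {(0, \<lambda>_. 0), (1, \<lambda>_. 0)} else {}) \<union> (\<lambda>\<alpha>. (2::nat, \<alpha>)) ` {\<alpha>. adj (\<lambda>_. 0, i) (\<alpha>, j)}"

definition coef :: "nat \<times> ('d \<Rightarrow> int) \<Rightarrow> int" where
  "coef t = (if fst t = 1 then -1 else 1)"

definition mon :: "nat \<Rightarrow> nat \<Rightarrow> nat \<times> ('d::finite \<Rightarrow> int) \<Rightarrow> ('d var \<Rightarrow>\<^sub>0 int)" where
  "mon i j t = (if fst t = 0 then Poly_Mapping.single Lam 1 else if fst t = 1 then Poly_Mapping.single (Vv i) 1
     else Poly_Mapping.single (edge_var i j (snd t)) 1 + zexp (snd t))"

lemma pvar_zpow: "pvar x * zpow \<alpha> = Poly_Mapping.single (Poly_Mapping.single x 1 + zexp \<alpha>) 1"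
  by (simp add: pvar_def zpow_def zexp_def mult_single)

lemma entry_eq:
  assumes fin: "finite {\<alpha>. adj (\<lambda>_. 0, i) (\<alpha>, j)}"
  shows "dispersion_matrix adj i j = (\<Sum>t\<in>Tset adj i j. Poly_Mapping.single (mon i j t) (coef t))"
proof -
  let ?A = "{\<alpha>. adj (\<lambda>_. 0, i) (\<alpha>, j)}"
  have img: "(\<Sum>t\<in>(\<lambda>\<alpha>. (2::nat, \<alpha>)) ` ?A. Poly_Mapping.single (mon i j t) (coef t)) =
      (\<Sum>\<alpha>\<in>?A. pvar (edge_var i j \<alpha>) * zpow \<alpha>)"
    by (subst sum.reindex) (auto simp: inj_on_def mon_def coef_def pvar_zpow)
  show ?thesis
  proof (cases "i = j")
    case True
    have d: "{(0::nat, \<lambda>_::'a. 0::int), (1, \<lambda>_. 0)} \<inter> (\<lambda>\<alpha>. (2::nat, \<alpha>)) ` ?A = {}" by auto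
    have "(\<Sum>t\<in>Tset adj i j. Poly_Mapping.single (mon i j t) (coef t)) =
      (\<Sum>t\<in>{(0::nat, \<lambda>_::'a. 0::int), (1, \<lambda>_. 0)}. Poly_Mapping.single (mon i j t) (coef t)) +
      (\<Sum>t\<in>(\<lambda>\<alpha>. (2::nat, \<alpha>)) ` ?A. Poly_Mapping.single (mon i j t) (coef t))"
      unfolding Tset_def using True fin d by (simp add: sum.union_disjoint)
    also have "\<dots> = pvar Lam - pvar (Vv i) + (\<Sum>\<alpha>\<in>?A. pvar (edge_var i j \<alpha>) * zpow \<alpha>)"
      unfolding img by (simp add: mon_def coef_def pvar_def single_uminus)
    finally show ?thesis unfolding dispersion_matrix_def floquet_H_def using True by simp
  next
    case False
    then show ?thesis unfolding dispersion_matrix_def floquet_H_def Tset_def using img by simp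
  qed
qed

lemma prod_single:
  "(\<Prod>i\<in>A. Poly_Mapping.single (a i) (b i)) = Poly_Mapping.single (\<Sum>i\<in>A. a i) (\<Prod>i\<in>A. b i :: 'b::comm_ring_1)"
  by (induction A rule: infinite_finite_induct) (auto simp: mult_single)



definition PW :: "(('d::finite \<Rightarrow> int) \<times> nat \<Rightarrow> ('d \<Rightarrow> int) \<times> nat \<Rightarrow> bool) \<Rightarrow> nat \<Rightarrow> (nat \<Rightarrow> nat) \<Rightarrow> (nat \<Rightarrow> nat \<times> ('d \<Rightarrow> int)) set" where
  "PW adj n w = PiE {..<n} (\<lambda>i. Tset adj i (w i))"

definition msum :: "nat \<Rightarrow> (nat \<Rightarrow> nat) \<Rightarrow> (nat \<Rightarrow> nat \<times> ('d::finite \<Rightarrow> int)) \<Rightarrow> ('d var \<Rightarrow>\<^sub>0 int)" where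
  "msum n w f = (\<Sum>i<n. mon i (w i) (f i))"

definition csum :: "nat \<Rightarrow> (nat \<Rightarrow> nat \<times> ('d \<Rightarrow> int)) \<Rightarrow> int" where
  "csum n f = (\<Prod>i<n. coef (f i))"

lemma finite_Tset: "finite {\<alpha>. adj (\<lambda>_. 0, i) (\<alpha>, j)} \<Longrightarrow> finite (Tset adj i j)"
  unfolding Tset_def by simp

lemma perm_term_eq:
  assumes fin: "\<And>i j. finite {\<alpha>. adj (\<lambda>_. 0, i) (\<alpha>, j)}"
  shows "perm_term (dispersion_matrix adj) n w =
    (\<Sum>f\<in>PW adj n w. Poly_Mapping.single (msum n w f) (csum n f))"
proof -
  have E: "\<And>i j. dispersion_matrix adj i j = (\<Sum>t\<in>Tset adj i j. Poly_Mapping.single (mon i j t) (coef t))"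
    using entry_eq fin by blast
  have F: "\<And>i j. finite (Tset adj i j)" using finite_Tset fin by blast
  show ?thesis
    unfolding perm_term_def E PW_def msum_def csum_def
    by (subst prod_sum_PiE) (auto simp: F prod_single)
qed

lemma lookup_perm_term:
  assumes fin: "\<And>i j. finite {\<alpha>. adj (\<lambda>_. 0, i) (\<alpha>, j)}"
  shows "Poly_Mapping.lookup (perm_term (dispersion_matrix adj) n w) m =
    (\<Sum>f\<in>PW adj n w. if msum n w f = m then csum n f else 0)"
proof -
  have "perm_term (dispersion_matrix adj) n w =
    (\<Sum>f\<in>PW adj n w. Poly_Mapping.single (msum n w f) (csum n f))"
    by (rule perm_term_eq) (rule fin)
  then show ?thesis by (simp add: lookup_sum lookup_single when_def)
qed

lemma lookup_zexp_V: "Poly_Mapping.lookup (zexp \<alpha>) (Vv p) = 0"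
  by (simp add: zexp_def lookup_sum lookup_single)

lemma lookup_mon_V: "Poly_Mapping.lookup (mon i j t) (Vv p) = (if fst t = 1 \<and> i = p then 1 else 0)"
  by (simp add: mon_def lookup_add lookup_zexp_V lookup_single when_def edge_var_def)

lemma lookup_msum_V:
  assumes "p < n"
  shows "Poly_Mapping.lookup (msum n w f) (Vv p) = (if fst (f p) = 1 then 1 else 0)"
proof -
  have "Poly_Mapping.lookup (msum n w f) (Vv p) = (\<Sum>i<n. if i = p then (if fst (f p) = 1 then 1 else 0) else 0)"
    unfolding msum_def lookup_sum lookup_mon_V by (rule sum.cong) auto
  also have "\<dots> = (if fst (f p) = 1 then 1 else 0)" using assms by simp
  finally show ?thesis .
qed

lemma csum_eq:
  "csum n f = (\<Prod>i<n. if Poly_Mapping.lookup (msum n w f) (Vv i) = 1 then -1 else 1)"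
  unfolding csum_def coef_def by (rule prod.cong) (auto simp: lookup_msum_V)

definition gg :: "nat \<Rightarrow> nat \<Rightarrow> 'd var \<Rightarrow> int" where
  "gg i y v = (case v of Ev S \<Rightarrow> if fst ` S = {i, y} then 1 else 0 | _ \<Rightarrow> 0)"

lemma cntv_zexp: "cntv (gg i y) (zexp \<alpha>) = 0"
  by (simp add: zexp_def cntv_sum cntv_single gg_def)

lemma cntv_mon:
  "cntv (gg i y) (mon x j t) = (if fst t \<noteq> 0 \<and> fst t \<noteq> 1 \<and> {x, j} = {i, y} then 1 else 0)"
  by (auto simp: mon_def cntv_add cntv_single cntv_zexp gg_def edge_var_def)

lemma Tset_fst: "t \<in> Tset adj x j \<Longrightarrow> x \<noteq> j \<Longrightarrow> fst t = 2"
  unfolding Tset_def by auto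

lemma sum_pair:
  fixes i y n :: nat
  assumes "i \<noteq> y" "w permutes {..<n}"
  shows "(\<Sum>x<n. if {x, w x} = {i, y} then 1 else 0 :: int) =
     (if w i = y then 1 else 0) + (if w y = i then 1 else 0)"
proof -
  have "(\<Sum>x<n. if {x, w x} = {i, y} then 1 else 0 :: int) =
     (\<Sum>x<n. (if x = i then (if w i = y then 1 else 0) else 0) + (if x = y then (if w y = i then 1 else 0) else 0))"
    using assms(1) by (intro sum.cong) (auto simp: doubleton_eq_iff)
  also have "\<dots> = (if i < n then (if w i = y then 1 else 0) else 0) + (if y < n then (if w y = i then 1 else 0) else 0)"
  proof -
    have a: "(\<Sum>x\<in>{..<n}. if x = a then c else 0) = (if a < n then c else (0::int))" for a :: nat and c :: int
      by (subst sum.delta) auto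
    show ?thesis unfolding sum.distrib a ..
  qed
  also have "\<dots> = (if w i = y then 1 else 0) + (if w y = i then 1 else 0)"
    using permutes_not_in[OF assms(2), of i] permutes_not_in[OF assms(2), of y] assms(1) by auto
  finally show ?thesis .
qed

lemma cntv_msum:
  assumes "i \<noteq> y" "w permutes {..<n}" "f \<in> PW adj n w"
  shows "cntv (gg i y) (msum n w f) = (if w i = y then 1 else 0) + (if w y = i then 1 else 0)"
proof -
  have "cntv (gg i y) (msum n w f) = (\<Sum>x<n. if {x, w x} = {i, y} then 1 else 0 :: int)"
    unfolding msum_def cntv_sum
  proof (rule sum.cong[OF refl])
    fix x assume x: "x \<in> {..<n}"
    have ft: "f x \<in> Tset adj x (w x)" using assms(3) x unfolding PW_def by auto
    show "cntv (gg i y) (mon x (w x) (f x)) = (if {x, w x} = {i, y} then 1 else 0)"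
    proof (cases "{x, w x} = {i, y}")
      case True
      then have "x \<noteq> w x" using assms(1) by (auto simp: doubleton_eq_iff)
      then have "fst (f x) = 2" using Tset_fst[OF ft] by simp
      then show ?thesis using True by (simp add: cntv_mon)
    next
      case False
      then show ?thesis by (simp add: cntv_mon)
    qed
  qed
  also have "\<dots> = (if w i = y then 1 else 0) + (if w y = i then 1 else 0)"
    by (rule sum_pair[OF assms(1,2)])
  finally show ?thesis .
qed

lemma key_sign:
  assumes w: "w permutes {..<n}" and w': "w' permutes {..<n}"
    and f: "f \<in> PW adj n w" and f': "f' \<in> PW adj n w'"
    and eq: "msum n w f = msum n w' f'"
  shows "of_int (sign w) * csum n f = of_int (sign w') * csum n f'"
proof -
  have c: "csum n f = csum n f'"
    using csum_eq[of n f w] csum_eq[of n f' w'] eq by simp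
  have "Rel w w'"
    unfolding Rel_def
  proof (intro allI impI)
    fix i y :: nat assume iy: "i \<noteq> y"
    have "(if w i = y then 1 else 0) + (if w y = i then 1 else 0) =
        ((if w' i = y then 1 else 0) + (if w' y = i then 1 else 0) :: int)"
      using cntv_msum[OF iy w f] cntv_msum[OF iy w' f'] eq by simp
    then show "(if w i = y then 1 else 0) + (if w y = i then 1 else (0::nat)) =
        (if w' i = y then 1 else 0) + (if w' y = i then 1 else 0)"
      by (auto split: if_splits)
  qed
  then have "sign w = sign w'" using sign_eq_Rel[OF _ w w'] by simp
  then show ?thesis using c by simp
qed



lemma lookup_sign_mult:
  "Poly_Mapping.lookup (of_int (sign w) * (p :: ('a::comm_monoid_add \<Rightarrow>\<^sub>0 int))) m = sign w * Poly_Mapping.lookup p m"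
  by (cases rule: sign_cases[of w]) auto

theorem proposition2p1:
  fixes n :: nat
    and adj :: "('d::finite \<Rightarrow> int) \<times> nat \<Rightarrow> ('d \<Rightarrow> int) \<times> nat \<Rightarrow> bool"
  assumes "periodic_graph n adj"
  shows "cancellation_free (dispersion_matrix adj) n"
proof -
  have fin: "\<And>i j. finite {\<alpha>. adj (\<lambda>_. 0, i) (\<alpha>, j)}" using assms unfolding periodic_graph_def by blast
  have LP: "Poly_Mapping.lookup (perm_term (dispersion_matrix adj) n w') m' =
    (\<Sum>f\<in>PW adj n w'. if msum n w' f = m' then csum n f else 0)" for w' m'
    by (rule lookup_perm_term) (rule fin)
  have finPW: "finite (PW adj n w')" for w'
  proof -
    have "\<And>i j. finite (Tset adj i j)" using finite_Tset fin by blast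
    then show ?thesis unfolding PW_def by (intro finite_PiE) auto
  qed
  have finP: "finite {w. w permutes {..<n}}" by (rule finite_permutations) simp
  show ?thesis unfolding cancellation_free_def
  proof (intro allI impI subsetI)
    fix w m
    assume w: "w permutes {..<n}" and m: "m \<in> Poly_Mapping.keys (perm_term (dispersion_matrix adj) n w)"
    have "(\<Sum>f\<in>PW adj n w. if msum n w f = m then csum n f else 0) \<noteq> 0"
      using m LP[of w m] by (simp add: in_keys_iff)
    then obtain f0 where f0: "f0 \<in> PW adj n w" "(if msum n w f0 = m then csum n f0 else 0) \<noteq> 0"
      by (rule sum.not_neutral_contains_not_neutral)
    then have f0m: "msum n w f0 = m" by (auto split: if_splits)
    define s where "s = of_int (sign w) * csum n f0"
    have s0: "s \<noteq> 0" unfolding s_def csum_def coef_def by simp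
    define N where "N = (\<Sum>w'\<in>{w. w permutes {..<n}}. \<Sum>f\<in>PW adj n w'. if msum n w' f = m then 1 else (0::int))"
    have "Poly_Mapping.lookup (det_leibniz (dispersion_matrix adj) n) m =
       (\<Sum>w'\<in>{w. w permutes {..<n}}. sign w' * Poly_Mapping.lookup (perm_term (dispersion_matrix adj) n w') m)"
      unfolding det_leibniz_def lookup_sum lookup_sign_mult ..
    also have "\<dots> = (\<Sum>w'\<in>{w. w permutes {..<n}}. \<Sum>f\<in>PW adj n w'. if msum n w' f = m then s else 0)"
    proof (rule sum.cong[OF refl])
      fix w' assume w': "w' \<in> {w. w permutes {..<n}}"
      have "sign w' * Poly_Mapping.lookup (perm_term (dispersion_matrix adj) n w') m =
         (\<Sum>f\<in>PW adj n w'. if msum n w' f = m then sign w' * csum n f else 0)"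
        unfolding LP sum_distrib_left by (rule sum.cong) auto
      also have "\<dots> = (\<Sum>f\<in>PW adj n w'. if msum n w' f = m then s else 0)"
      proof (rule sum.cong[OF refl])
        fix f assume f: "f \<in> PW adj n w'"
        show "(if msum n w' f = m then sign w' * csum n f else 0) = (if msum n w' f = m then s else 0)"
        proof (cases "msum n w' f = m")
          case True
          then have "of_int (sign w') * csum n f = of_int (sign w) * csum n f0"
            using key_sign[of w' n w f adj f0] w' w f f0(1) f0m by simp
          then show ?thesis using True unfolding s_def by simp
        qed simp
      qed
      finally show "sign w' * Poly_Mapping.lookup (perm_term (dispersion_matrix adj) n w') m =
         (\<Sum>f\<in>PW adj n w'. if msum n w' f = m then s else 0)" .
    qed
    also have "\<dots> = s * N" unfolding N_def sum_distrib_left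
      by (intro sum.cong refl) auto
    finally have L: "Poly_Mapping.lookup (det_leibniz (dispersion_matrix adj) n) m = s * N" .
    have "1 \<le> (\<Sum>f\<in>PW adj n w. if msum n w f = m then 1 else (0::int))"
    proof -
      have "(if msum n w f0 = m then 1 else (0::int)) \<le> (\<Sum>f\<in>PW adj n w. if msum n w f = m then 1 else (0::int))"
        by (rule member_le_sum[OF f0(1)]) (auto simp: finPW)
      then show ?thesis using f0m by simp
    qed
    also have "\<dots> \<le> N" unfolding N_def
      by (rule member_le_sum) (auto simp: w finP intro: sum_nonneg)
    finally have "N \<noteq> 0" by simp
    then show "m \<in> Poly_Mapping.keys (det_leibniz (dispersion_matrix adj) n)"
      using L s0 by (simp add: in_keys_iff)
  qed
qed

end
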